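(* Let $Q=(G\leftleftarrows A)$ be a multiplicative graph with semigroup of vertices $G$. Let $\mathbf k[A]$ be the vector space with basis $A$ and $\mathbf k[G]$ the semigroup algebra, and let $\phi:\mathbf k[A]\to\mathbf k[G]$, $\phi(a)=t(a)-s(a)$. Equip $\mathbf k[A]$ with the $\mathbf k[G]$-bimodule structure extending linearly the two-sided action of $G$ on $A$ given by $\mu$, equip $\mathbf k[G]$ with $\Delta_0(g)=g\otimes g$, and define $\Delta_1:\mathbf k[A]\to\mathbf k[A]\otimes\mathbf k[G]+\mathbf k[G]\otimes\mathbf k[A]$ by $\Delta_1(a)=a\otimes t(a)+s(a)\otimes a$. Then $(\mathbf k[A]\xrightarrow{\phi}\mathbf k[G])$ with these structures is a bialgebra in the Loday–Pirashvili category $\mathcal{LM}$.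
   Context: A multiplicative graph is a directed graph $(G\overset{s}{\underset{t}{\leftleftarrows}}A)$ with an associative morphism $\mu:Q\,\square\,Q\to Q$ from its Cartesian product square (vertices $G\times G$, arrows $A\times G\sqcup G\times A$); this makes $G$ a semigroup and gives left and right actions $g\cdot a=\mu(g,a)$, $a\cdot g=\mu(a,g)$ of $G$ on $A$ with $s(g\cdot a)=gs(a)$, $t(g\cdot a)=gt(a)$, $s(a\cdot g)=s(a)g$, $t(a\cdot g)=t(a)g$. Over a field $\mathbf k$ of characteristic $0$, the category $\mathcal{LM}$ has objects linear maps $U\xrightarrow{f}V$ and morphisms commutative squares, with tensor product $(U\xrightarrow{f}V)\otimes(U'\xrightarrow{f'}V')=(U\otimes V'+V\otimes U'\xrightarrow{f\otimes\mathrm{Id}+\mathrm{Id}\otimes f'}V\otimes V')$. An algebra in $\mathcal{LM}$ is $(\mathcal A\xrightarrow{f}\mathcal H)$ with $\mathcal H$ an algebra, $\mathcal A$ an $\mathcal H$-bimodule and $f$ a bimodule map. A bialgebra in $\mathcal{LM}$ is such an algebra together with a coproduct $\Delta_0$ making $\mathcal H$ a bialgebra and a two-sided coaction $\Delta_1:\mathcal A\to\mathcal A\otimes\mathcal H+\mathcal H\otimes\mathcal A$ which is an $\mathcal H$-bimodule map (with $\mathcal H$ acting on the target via $\Delta_0$) and satisfies $\Delta_0\circ f=(f\otimes\mathrm{Id}+\mathrm{Id}\otimes f)\circ\Delta_1$. *)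

theory Defs
  imports "HOL-Library.Poly_Mapping"
begin

text \<open>A directed graph with vertex type 'g and arrow type 'a, source s and target t,
together with an associative morphism mu from the Cartesian product square.
On vertices mu is a multiplication m; on arrows A x G it is the right action ra,
on G x A the left action la.  Associativity of mu on the triple product
(vertices G x G x G; arrows A x G x G, G x A x G, G x G x A) gives the four equations.\<close>

definition mult_graph ::
  "('a \<Rightarrow> 'g) \<Rightarrow> ('a \<Rightarrow> 'g) \<Rightarrow> ('g \<Rightarrow> 'g \<Rightarrow> 'g) \<Rightarrow> ('g \<Rightarrow> 'a \<Rightarrow> 'a) \<Rightarrow> ('a \<Rightarrow> 'g \<Rightarrow> 'a) \<Rightarrow> bool"
  where "mult_graph s t m la ra \<longleftrightarrow>
     (\<forall>g h k. m (m g h) k = m g (m h k)) \<and>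
     (\<forall>g a. s (la g a) = m g (s a) \<and> t (la g a) = m g (t a)) \<and>
     (\<forall>a g. s (ra a g) = m (s a) g \<and> t (ra a g) = m (t a) g) \<and>
     (\<forall>g h a. la (m g h) a = la g (la h a)) \<and>
     (\<forall>g a h. ra (la g a) h = la g (ra a h)) \<and>
     (\<forall>a g h. ra (ra a g) h = ra a (m g h))"

text \<open>k[X] is the type of finitely supported functions from 'x to 'k.  The tensor product k[X] \<otimes> k[Y] is identified with
k[X \<times> Y], and the direct sum k[X] \<oplus> k[Y] with k[X + Y].\<close>

definition smult_pm :: "'k::field \<Rightarrow> ('x \<Rightarrow>\<^sub>0 'k) \<Rightarrow> ('x \<Rightarrow>\<^sub>0 'k)"
  where "smult_pm c v = Poly_Mapping.map (\<lambda>x. c * x) v"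

definition bvec :: "'x \<Rightarrow> ('x \<Rightarrow>\<^sub>0 'k::field)"
  where "bvec x = Poly_Mapping.single x 1"

definition lin_ext :: "('x \<Rightarrow> ('y \<Rightarrow>\<^sub>0 'k::field)) \<Rightarrow> ('x \<Rightarrow>\<^sub>0 'k) \<Rightarrow> ('y \<Rightarrow>\<^sub>0 'k)"
  where "lin_ext F v = (\<Sum>x\<in>Poly_Mapping.keys v. smult_pm (Poly_Mapping.lookup v x) (F x))"

definition bil_ext :: "('x \<Rightarrow> 'y \<Rightarrow> ('z \<Rightarrow>\<^sub>0 'k::field)) \<Rightarrow> ('x \<Rightarrow>\<^sub>0 'k) \<Rightarrow> ('y \<Rightarrow>\<^sub>0 'k) \<Rightarrow> ('z \<Rightarrow>\<^sub>0 'k)"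
  where "bil_ext B u v = (\<Sum>x\<in>Poly_Mapping.keys u. \<Sum>y\<in>Poly_Mapping.keys v. smult_pm (Poly_Mapping.lookup u x * Poly_Mapping.lookup v y) (B x y))"

definition linear_pm :: "(('x \<Rightarrow>\<^sub>0 'k::field) \<Rightarrow> ('y \<Rightarrow>\<^sub>0 'k)) \<Rightarrow> bool"
  where "linear_pm f \<longleftrightarrow> (\<forall>u v. f (u + v) = f u + f v) \<and> (\<forall>c v. f (smult_pm c v) = smult_pm c (f v))"

definition bilinear_pm :: "(('x \<Rightarrow>\<^sub>0 'k::field) \<Rightarrow> ('y \<Rightarrow>\<^sub>0 'k) \<Rightarrow> ('z \<Rightarrow>\<^sub>0 'k)) \<Rightarrow> bool"
  where "bilinear_pm B \<longleftrightarrow> (\<forall>u. linear_pm (B u)) \<and> (\<forall>v. linear_pm (\<lambda>u. B u v))"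

definition tens :: "('x \<Rightarrow>\<^sub>0 'k::field) \<Rightarrow> ('y \<Rightarrow>\<^sub>0 'k) \<Rightarrow> ('x \<times> 'y \<Rightarrow>\<^sub>0 'k)"
  where "tens u v = bil_ext (\<lambda>x y. bvec (x, y)) u v"

definition tmap :: "(('x \<Rightarrow>\<^sub>0 'k::field) \<Rightarrow> ('x' \<Rightarrow>\<^sub>0 'k)) \<Rightarrow> (('y \<Rightarrow>\<^sub>0 'k) \<Rightarrow> ('y' \<Rightarrow>\<^sub>0 'k))
     \<Rightarrow> ('x \<times> 'y \<Rightarrow>\<^sub>0 'k) \<Rightarrow> ('x' \<times> 'y' \<Rightarrow>\<^sub>0 'k)"
  where "tmap F G = lin_ext (\<lambda>(x, y). tens (F (bvec x)) (G (bvec y)))"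

definition assoc_pm :: "(('x \<times> 'y) \<times> 'z \<Rightarrow>\<^sub>0 'k::field) \<Rightarrow> ('x \<times> ('y \<times> 'z) \<Rightarrow>\<^sub>0 'k)"
  where "assoc_pm = lin_ext (\<lambda>((x, y), z). bvec (x, (y, z)))"

definition part_AH :: "('x + 'y \<Rightarrow>\<^sub>0 'k::field) \<Rightarrow> ('x \<Rightarrow>\<^sub>0 'k)"
  where "part_AH = lin_ext (\<lambda>z. case z of Inl x \<Rightarrow> bvec x | Inr _ \<Rightarrow> 0)"

definition part_HA :: "('x + 'y \<Rightarrow>\<^sub>0 'k::field) \<Rightarrow> ('y \<Rightarrow>\<^sub>0 'k)"
  where "part_HA = lin_ext (\<lambda>z. case z of Inl _ \<Rightarrow> 0 | Inr y \<Rightarrow> bvec y)"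

definition inl_pm :: "('x \<Rightarrow>\<^sub>0 'k::field) \<Rightarrow> ('x + 'y \<Rightarrow>\<^sub>0 'k)"
  where "inl_pm = lin_ext (\<lambda>x. bvec (Inl x))"

definition inr_pm :: "('y \<Rightarrow>\<^sub>0 'k::field) \<Rightarrow> ('x + 'y \<Rightarrow>\<^sub>0 'k)"
  where "inr_pm = lin_ext (\<lambda>y. bvec (Inr y))"

text \<open>An object (\<A> --f--> \<H>) with \<A> = k['a], \<H> = k['g].
  mul: product of \<H>; la, ra: left and right actions of \<H> on \<A>.
  Algebras are associative, not necessarily unital (the paper starts from a semigroup).\<close>

definition lm_algebra ::
  "(('a \<Rightarrow>\<^sub>0 'k::field) \<Rightarrow> ('g \<Rightarrow>\<^sub>0 'k))
   \<Rightarrow> (('g \<Rightarrow>\<^sub>0 'k) \<Rightarrow> ('g \<Rightarrow>\<^sub>0 'k) \<Rightarrow> ('g \<Rightarrow>\<^sub>0 'k))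
   \<Rightarrow> (('g \<Rightarrow>\<^sub>0 'k) \<Rightarrow> ('a \<Rightarrow>\<^sub>0 'k) \<Rightarrow> ('a \<Rightarrow>\<^sub>0 'k))
   \<Rightarrow> (('a \<Rightarrow>\<^sub>0 'k) \<Rightarrow> ('g \<Rightarrow>\<^sub>0 'k) \<Rightarrow> ('a \<Rightarrow>\<^sub>0 'k)) \<Rightarrow> bool"
  where "lm_algebra f mul la ra \<longleftrightarrow>
     linear_pm f \<and> bilinear_pm mul \<and> bilinear_pm la \<and> bilinear_pm ra \<and>
     (\<forall>x y z. mul (mul x y) z = mul x (mul y z)) \<and>
     (\<forall>x y a. la (mul x y) a = la x (la y a)) \<and>
     (\<forall>x a y. ra (la x a) y = la x (ra a y)) \<and>
     (\<forall>a x y. ra (ra a x) y = ra a (mul x y)) \<and>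
     (\<forall>x a. f (la x a) = mul x (f a)) \<and>
     (\<forall>a x. f (ra a x) = mul (f a) x)"

definition tmul :: "(('g \<Rightarrow>\<^sub>0 'k::field) \<Rightarrow> ('g \<Rightarrow>\<^sub>0 'k) \<Rightarrow> ('g \<Rightarrow>\<^sub>0 'k))
   \<Rightarrow> ('g \<times> 'g \<Rightarrow>\<^sub>0 'k) \<Rightarrow> ('g \<times> 'g \<Rightarrow>\<^sub>0 'k) \<Rightarrow> ('g \<times> 'g \<Rightarrow>\<^sub>0 'k)"
  where "tmul mul = bil_ext (\<lambda>(g1, g2) (h1, h2). tens (mul (bvec g1) (bvec h1)) (mul (bvec g2) (bvec h2)))"

definition tlact ::
  "(('g \<Rightarrow>\<^sub>0 'k::field) \<Rightarrow> ('g \<Rightarrow>\<^sub>0 'k) \<Rightarrow> ('g \<Rightarrow>\<^sub>0 'k))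
   \<Rightarrow> (('g \<Rightarrow>\<^sub>0 'k) \<Rightarrow> ('a \<Rightarrow>\<^sub>0 'k) \<Rightarrow> ('a \<Rightarrow>\<^sub>0 'k))
   \<Rightarrow> ('g \<times> 'g \<Rightarrow>\<^sub>0 'k) \<Rightarrow> (('a \<times> 'g) + ('g \<times> 'a) \<Rightarrow>\<^sub>0 'k) \<Rightarrow> (('a \<times> 'g) + ('g \<times> 'a) \<Rightarrow>\<^sub>0 'k)"
  where "tlact mul la = bil_ext (\<lambda>(g1, g2) z. case z of
       Inl (a, h) \<Rightarrow> inl_pm (tens (la (bvec g1) (bvec a)) (mul (bvec g2) (bvec h)))
     | Inr (h, a) \<Rightarrow> inr_pm (tens (mul (bvec g1) (bvec h)) (la (bvec g2) (bvec a))))"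

definition tract ::
  "(('g \<Rightarrow>\<^sub>0 'k::field) \<Rightarrow> ('g \<Rightarrow>\<^sub>0 'k) \<Rightarrow> ('g \<Rightarrow>\<^sub>0 'k))
   \<Rightarrow> (('a \<Rightarrow>\<^sub>0 'k) \<Rightarrow> ('g \<Rightarrow>\<^sub>0 'k) \<Rightarrow> ('a \<Rightarrow>\<^sub>0 'k))
   \<Rightarrow> (('a \<times> 'g) + ('g \<times> 'a) \<Rightarrow>\<^sub>0 'k) \<Rightarrow> ('g \<times> 'g \<Rightarrow>\<^sub>0 'k) \<Rightarrow> (('a \<times> 'g) + ('g \<times> 'a) \<Rightarrow>\<^sub>0 'k)"
  where "tract mul ra = bil_ext (\<lambda>z (g1, g2). case z of
       Inl (a, h) \<Rightarrow> inl_pm (tens (ra (bvec a) (bvec g1)) (mul (bvec h) (bvec g2)))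
     | Inr (h, a) \<Rightarrow> inr_pm (tens (mul (bvec h) (bvec g1)) (ra (bvec a) (bvec g2))))"

text \<open>Bialgebra in LM: algebra in LM, \<H> a bialgebra with coproduct D0 (coassociative,
  multiplicative), D1 : \<A> \<rightarrow> \<A> \<otimes> \<H> + \<H> \<otimes> \<A> a two-sided coaction (coassociativity in LM,
  written componentwise on \<A>\<otimes>\<H>\<otimes>\<H>, \<H>\<otimes>\<A>\<otimes>\<H>, \<H>\<otimes>\<H>\<otimes>\<A>), an \<H>-bimodule map for the
  actions via D0, and D0 \<circ> f = (f \<otimes> Id + Id \<otimes> f) \<circ> D1.\<close>
definition lm_bialgebra ::
  "(('a \<Rightarrow>\<^sub>0 'k::field) \<Rightarrow> ('g \<Rightarrow>\<^sub>0 'k))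
   \<Rightarrow> (('g \<Rightarrow>\<^sub>0 'k) \<Rightarrow> ('g \<Rightarrow>\<^sub>0 'k) \<Rightarrow> ('g \<Rightarrow>\<^sub>0 'k))
   \<Rightarrow> (('g \<Rightarrow>\<^sub>0 'k) \<Rightarrow> ('a \<Rightarrow>\<^sub>0 'k) \<Rightarrow> ('a \<Rightarrow>\<^sub>0 'k))
   \<Rightarrow> (('a \<Rightarrow>\<^sub>0 'k) \<Rightarrow> ('g \<Rightarrow>\<^sub>0 'k) \<Rightarrow> ('a \<Rightarrow>\<^sub>0 'k))
   \<Rightarrow> (('g \<Rightarrow>\<^sub>0 'k) \<Rightarrow> ('g \<times> 'g \<Rightarrow>\<^sub>0 'k))
   \<Rightarrow> (('a \<Rightarrow>\<^sub>0 'k) \<Rightarrow> (('a \<times> 'g) + ('g \<times> 'a) \<Rightarrow>\<^sub>0 'k)) \<Rightarrow> bool"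
  where "lm_bialgebra f mul la ra D0 D1 \<longleftrightarrow>
     lm_algebra f mul la ra \<and> linear_pm D0 \<and> linear_pm D1 \<and>
     (\<forall>x. assoc_pm (tmap D0 id (D0 x)) = tmap id D0 (D0 x)) \<and>
     (\<forall>x y. D0 (mul x y) = tmul mul (D0 x) (D0 y)) \<and>
     (\<forall>a. assoc_pm (tmap (part_AH \<circ> D1) id (part_AH (D1 a))) = tmap id D0 (part_AH (D1 a))) \<and>
     (\<forall>a. assoc_pm (tmap (part_HA \<circ> D1) id (part_AH (D1 a))) = tmap id (part_AH \<circ> D1) (part_HA (D1 a))) \<and>
     (\<forall>a. assoc_pm (tmap D0 id (part_HA (D1 a))) = tmap id (part_HA \<circ> D1) (part_HA (D1 a))) \<and>
     (\<forall>x a. D1 (la x a) = tlact mul la (D0 x) (D1 a)) \<and>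
     (\<forall>a x. D1 (ra a x) = tract mul ra (D1 a) (D0 x)) \<and>
     (\<forall>a. D0 (f a) = tmap f id (part_AH (D1 a)) + tmap id f (part_HA (D1 a)))"

end

theory Submission
  imports Defs
begin


lemma lookup_smult[simp]: "Poly_Mapping.lookup (smult_pm c v) x = c * Poly_Mapping.lookup v x"
  unfolding smult_pm_def by transfer (simp add: when_def)

lemma smult_zero_left[simp]: "smult_pm 0 v = 0"
  by (rule poly_mapping_eqI) simp
lemma smult_zero_right[simp]: "smult_pm c 0 = 0"
  by (rule poly_mapping_eqI) simp
lemma smult_one[simp]: "smult_pm 1 v = v"
  by (rule poly_mapping_eqI) simp
lemma smult_add_left: "smult_pm (c + d) v = smult_pm c v + smult_pm d v"
  by (rule poly_mapping_eqI) (simp add: lookup_add distrib_right)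
lemma smult_add_right: "smult_pm c (u + v) = smult_pm c u + smult_pm c v"
  by (rule poly_mapping_eqI) (simp add: lookup_add distrib_left)
lemma smult_smult[simp]: "smult_pm c (smult_pm d v) = smult_pm (c * d) v"
  by (rule poly_mapping_eqI) (simp add: mult.assoc)
lemma smult_sum: "smult_pm c (sum f S) = (\<Sum>x\<in>S. smult_pm c (f x))"
  by (induction S rule: infinite_finite_induct) (auto simp: smult_add_right)

lemma lin_ext_superset:
  assumes "finite S" "Poly_Mapping.keys v \<subseteq> S"
  shows "lin_ext F v = (\<Sum>x\<in>S. smult_pm (Poly_Mapping.lookup v x) (F x))"
  unfolding lin_ext_def
  by (rule sum.mono_neutral_left) (use assms in \<open>auto simp: in_keys_iff\<close>)

lemma linear_lin_ext: "linear_pm (lin_ext F)"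
  unfolding linear_pm_def
proof (intro conjI allI)
  fix u v :: "'a \<Rightarrow>\<^sub>0 'b"
  let ?S = "Poly_Mapping.keys u \<union> Poly_Mapping.keys v"
  have "Poly_Mapping.keys (u + v) \<subseteq> ?S" by (rule keys_add)
  then show "lin_ext F (u + v) = lin_ext F u + lin_ext F v"
    by (simp add: lin_ext_superset[of ?S] lookup_add smult_add_left sum.distrib)
next
  fix c :: 'b and v :: "'a \<Rightarrow>\<^sub>0 'b"
  have "Poly_Mapping.keys (smult_pm c v) \<subseteq> Poly_Mapping.keys v"
    by (auto simp: in_keys_iff)
  then show "lin_ext F (smult_pm c v) = smult_pm c (lin_ext F v)"
    by (simp add: lin_ext_superset[of "Poly_Mapping.keys v"] smult_sum)
qed

lemma lin_ext_bvec[simp]: "lin_ext F (bvec x) = F x"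
  unfolding lin_ext_def bvec_def by simp

lemma linear_add: "linear_pm L \<Longrightarrow> L (u + v) = L u + L v"
  unfolding linear_pm_def by blast

lemma linear_zero: "linear_pm L \<Longrightarrow> L 0 = 0"
proof -
  assume "linear_pm L"
  then have "L (0 + 0) = L 0 + L 0" by (rule linear_add)
  then show "L 0 = 0" by simp
qed

lemma linear_smult: "linear_pm L \<Longrightarrow> L (smult_pm c v) = smult_pm c (L v)"
  unfolding linear_pm_def by blast

lemma linear_diff: "linear_pm L \<Longrightarrow> L (u - v) = L u - L v"
proof -
  assume "linear_pm L"
  then have "L (u - v + v) = L (u - v) + L v" by (rule linear_add)
  then show ?thesis by (simp add: eq_diff_eq)
qed

lemma linear_sum: "linear_pm L \<Longrightarrow> L (sum f S) = (\<Sum>x\<in>S. L (f x))"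
  by (induction S rule: infinite_finite_induct) (auto simp: linear_zero linear_add)

lemma vec_expand: "v = (\<Sum>x\<in>Poly_Mapping.keys v. smult_pm (Poly_Mapping.lookup v x) (bvec x))"
proof (rule poly_mapping_eqI)
  fix k
  show "Poly_Mapping.lookup v k = Poly_Mapping.lookup (\<Sum>x\<in>Poly_Mapping.keys v. smult_pm (Poly_Mapping.lookup v x) (bvec x)) k"
  proof -
    have eq: "(\<lambda>x. Poly_Mapping.lookup v x * Poly_Mapping.lookup (bvec x) k) = (\<lambda>x. if x = k then Poly_Mapping.lookup v k else 0)"
      by (auto simp: bvec_def lookup_single when_def)
    show ?thesis
      unfolding lookup_sum lookup_smult eq by (simp add: in_keys_iff)
  qed
qed

lemma linear_is_lin_ext: "linear_pm L \<Longrightarrow> L v = lin_ext (\<lambda>x. L (bvec x)) v"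
  apply (subst vec_expand[of v])
  apply (simp add: linear_sum linear_smult lin_ext_def)
  done

lemma lin_eqI:
  assumes "linear_pm L1" "linear_pm L2" "\<And>x. L1 (bvec x) = L2 (bvec x)"
  shows "L1 v = L2 v"
proof -
  have e: "(\<lambda>x. L1 (bvec x)) = (\<lambda>x. L2 (bvec x))" by (rule ext) (rule assms(3))
  show ?thesis
    unfolding linear_is_lin_ext[OF assms(1), of v] linear_is_lin_ext[OF assms(2), of v] e ..
qed

lemma linear_comp: "linear_pm f \<Longrightarrow> linear_pm g \<Longrightarrow> linear_pm (\<lambda>x. f (g x))"
  unfolding linear_pm_def by simp

lemma linear_plus: "linear_pm f \<Longrightarrow> linear_pm g \<Longrightarrow> linear_pm (\<lambda>x. f x + g x)"
  unfolding linear_pm_def by (simp add: smult_add_right ac_simps)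

lemma linear_id: "linear_pm (\<lambda>x. x)" "linear_pm id"
  unfolding linear_pm_def by auto

lemma bil_ext_1: "bil_ext B u v = lin_ext (\<lambda>x. lin_ext (\<lambda>y. B x y) v) u"
  unfolding bil_ext_def lin_ext_def by (simp add: smult_sum)

lemma bil_ext_2: "bil_ext B u v = lin_ext (\<lambda>y. lin_ext (\<lambda>x. B x y) u) v"
  unfolding bil_ext_def lin_ext_def
  by (subst sum.swap) (simp add: smult_sum mult.commute)

lemma bilinear_bil_ext: "bilinear_pm (bil_ext B)"
proof -
  have 1: "bil_ext B u = lin_ext (\<lambda>y. lin_ext (\<lambda>x. B x y) u)" for u
    by (rule ext) (rule bil_ext_2)
  have 2: "(\<lambda>u. bil_ext B u v) = lin_ext (\<lambda>x. lin_ext (\<lambda>y. B x y) v)" for v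
    by (rule ext) (rule bil_ext_1)
  show ?thesis unfolding bilinear_pm_def
  proof (intro conjI allI)
    show "linear_pm (bil_ext B u)" for u unfolding 1 by (rule linear_lin_ext)
    show "linear_pm (\<lambda>u. bil_ext B u v)" for v unfolding 2 by (rule linear_lin_ext)
  qed
qed

lemma bil_ext_bvec[simp]: "bil_ext B (bvec x) (bvec y) = B x y"
  by (simp add: bil_ext_1)

lemma bil_linL: "bilinear_pm B \<Longrightarrow> linear_pm (\<lambda>u. B u v)"
  unfolding bilinear_pm_def by blast
lemma bil_linR: "bilinear_pm B \<Longrightarrow> linear_pm (\<lambda>v. B u v)"
  unfolding bilinear_pm_def by (simp add: eta_contract_eq)

lemma linear_bil_ext_L: "linear_pm (\<lambda>u. bil_ext B u v)"
  by (rule bil_linL[OF bilinear_bil_ext])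
lemma linear_bil_ext_R: "linear_pm (\<lambda>v. bil_ext B u v)"
  by (rule bil_linR[OF bilinear_bil_ext])
lemma linear_bil_ext_R': "linear_pm (bil_ext B u)"
  using linear_bil_ext_R[of B u] by (simp add: eta_contract_eq)

lemma tens_bvec[simp]: "tens (bvec x) (bvec y) = bvec (x, y)"
  by (simp add: tens_def)

lemma tmap_bvec[simp]: "tmap F G (bvec (x, y)) = tens (F (bvec x)) (G (bvec y))"
  by (simp add: tmap_def)


lemma lin_ext_add[simp]: "lin_ext F (u + v) = lin_ext F u + lin_ext F v"
  by (rule linear_add[OF linear_lin_ext])
lemma lin_ext_diff[simp]: "lin_ext F (u - v) = lin_ext F u - lin_ext F v"
  by (rule linear_diff[OF linear_lin_ext])
lemma bil_ext_add_L[simp]: "bil_ext B (u + v) w = bil_ext B u w + bil_ext B v w"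
  by (rule linear_add[OF linear_bil_ext_L])
lemma bil_ext_add_R[simp]: "bil_ext B w (u + v) = bil_ext B w u + bil_ext B w v"
  by (rule linear_add[OF linear_bil_ext_R])
lemma bil_ext_diff_L[simp]: "bil_ext B (u - v) w = bil_ext B u w - bil_ext B v w"
  by (rule linear_diff[OF linear_bil_ext_L])
lemma bil_ext_diff_R[simp]: "bil_ext B w (u - v) = bil_ext B w u - bil_ext B w v"
  by (rule linear_diff[OF linear_bil_ext_R])
lemma tens_add_L[simp]: "tens (u + v) w = tens u w + tens v w" unfolding tens_def by simp
lemma tens_add_R[simp]: "tens w (u + v) = tens w u + tens w v" unfolding tens_def by simp
lemma tens_diff_L[simp]: "tens (u - v) w = tens u w - tens v w" unfolding tens_def by simp
lemma tens_diff_R[simp]: "tens w (u - v) = tens w u - tens w v" unfolding tens_def by simp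

lemma lin_c_lin_ext: "linear_pm g \<Longrightarrow> linear_pm (\<lambda>x. lin_ext F (g x))"
  by (rule linear_comp[OF linear_lin_ext])
lemma lin_c_bilL: "linear_pm g \<Longrightarrow> linear_pm (\<lambda>x. bil_ext B (g x) v)"
  by (rule linear_comp[OF linear_bil_ext_L])
lemma lin_c_bilR: "linear_pm g \<Longrightarrow> linear_pm (\<lambda>x. bil_ext B u (g x))"
  by (rule linear_comp[OF linear_bil_ext_R])
lemma lin_c_tmap: "linear_pm g \<Longrightarrow> linear_pm (\<lambda>x. tmap F G (g x))"
  unfolding tmap_def by (rule lin_c_lin_ext)
lemma lin_c_assoc: "linear_pm g \<Longrightarrow> linear_pm (\<lambda>x. assoc_pm (g x))"
  unfolding assoc_pm_def by (rule lin_c_lin_ext)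
lemma lin_c_AH: "linear_pm g \<Longrightarrow> linear_pm (\<lambda>x. part_AH (g x))"
  unfolding part_AH_def by (rule lin_c_lin_ext)
lemma lin_c_HA: "linear_pm g \<Longrightarrow> linear_pm (\<lambda>x. part_HA (g x))"
  unfolding part_HA_def by (rule lin_c_lin_ext)
lemma lin_c_tmul: "linear_pm g \<Longrightarrow> linear_pm (\<lambda>x. tmul M (g x) v)"
  unfolding tmul_def by (rule lin_c_bilL)
lemma lin_c_tmulR: "linear_pm g \<Longrightarrow> linear_pm (\<lambda>x. tmul M u (g x))"
  unfolding tmul_def by (rule lin_c_bilR)
lemma lin_c_tlact: "linear_pm g \<Longrightarrow> linear_pm (\<lambda>x. tlact M L (g x) v)"
  unfolding tlact_def by (rule lin_c_bilL)
lemma lin_c_tlactR: "linear_pm g \<Longrightarrow> linear_pm (\<lambda>x. tlact M L u (g x))"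
  unfolding tlact_def by (rule lin_c_bilR)
lemma lin_c_tract: "linear_pm g \<Longrightarrow> linear_pm (\<lambda>x. tract M L (g x) v)"
  unfolding tract_def by (rule lin_c_bilL)
lemma lin_c_tractR: "linear_pm g \<Longrightarrow> linear_pm (\<lambda>x. tract M L u (g x))"
  unfolding tract_def by (rule lin_c_bilR)

lemmas lin_rules = linear_id(1) linear_plus lin_c_lin_ext lin_c_bilL lin_c_bilR lin_c_tmap lin_c_assoc
  lin_c_AH lin_c_HA lin_c_tmul lin_c_tmulR lin_c_tlact lin_c_tlactR lin_c_tract lin_c_tractR

lemma bi_eqI:
  assumes "\<And>y. linear_pm (\<lambda>x. P x y)" "\<And>y. linear_pm (\<lambda>x. Q x y)"
    "\<And>x. linear_pm (\<lambda>y. P x y)" "\<And>x. linear_pm (\<lambda>y. Q x y)"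
    "\<And>a b. P (bvec a) (bvec b) = Q (bvec a) (bvec b)"
  shows "P x y = Q x y"
proof -
  have h: "P (bvec a) y = Q (bvec a) y" for a
    by (rule lin_eqI[of "\<lambda>y. P (bvec a) y" "\<lambda>y. Q (bvec a) y"]) (rule assms(3), rule assms(4), rule assms(5))
  show ?thesis
    by (rule lin_eqI[of "\<lambda>x. P x y" "\<lambda>x. Q x y"]) (rule assms(1), rule assms(2), rule h)
qed

lemma tri_eqI:
  assumes "\<And>y z. linear_pm (\<lambda>x. P x y z)" "\<And>y z. linear_pm (\<lambda>x. Q x y z)"
    "\<And>x z. linear_pm (\<lambda>y. P x y z)" "\<And>x z. linear_pm (\<lambda>y. Q x y z)"
    "\<And>x y. linear_pm (\<lambda>z. P x y z)" "\<And>x y. linear_pm (\<lambda>z. Q x y z)"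
    "\<And>a b c. P (bvec a) (bvec b) (bvec c) = Q (bvec a) (bvec b) (bvec c)"
  shows "P x y z = Q x y z"
proof -
  have h: "P (bvec a) y z = Q (bvec a) y z" for a
    by (rule bi_eqI[where P="\<lambda>y z. P (bvec a) y z" and Q="\<lambda>y z. Q (bvec a) y z"]) (rule assms(3), rule assms(4), rule assms(5), rule assms(6), rule assms(7))
  show ?thesis
    by (rule lin_eqI[of "\<lambda>x. P x y z" "\<lambda>x. Q x y z"]) (rule assms(1), rule assms(2), rule h)
qed



theorem mainTheorem7:
  fixes s t :: "'a \<Rightarrow> 'g" and m :: "'g \<Rightarrow> 'g \<Rightarrow> 'g"
    and la :: "'g \<Rightarrow> 'a \<Rightarrow> 'a" and ra :: "'a \<Rightarrow> 'g \<Rightarrow> 'a"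
  assumes "mult_graph s t m la ra"
  shows "lm_bialgebra
     (lin_ext (\<lambda>a. bvec (t a) - bvec (s a)) :: ('a \<Rightarrow>\<^sub>0 'k::field_char_0) \<Rightarrow> ('g \<Rightarrow>\<^sub>0 'k))
     (bil_ext (\<lambda>g h. bvec (m g h)))
     (bil_ext (\<lambda>g a. bvec (la g a)))
     (bil_ext (\<lambda>a g. bvec (ra a g)))
     (lin_ext (\<lambda>g. bvec (g, g)))
     (lin_ext (\<lambda>a. bvec (Inl (a, t a)) + bvec (Inr (s a, a))))"
    (is "lm_bialgebra ?f ?mul ?la ?ra ?D0 ?D1")
proof -
  note mg = assms[unfolded mult_graph_def]
  have m_assoc[simp]: "m (m g h) k = m g (m h k)" for g h k using mg by blast
  have st_la[simp]: "s (la g a) = m g (s a)" "t (la g a) = m g (t a)" for g a using mg by blast+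
  have st_ra[simp]: "s (ra a g) = m (s a) g" "t (ra a g) = m (t a) g" for g a using mg by blast+
  have la_m[simp]: "la (m g h) a = la g (la h a)" for g h a using mg by blast
  have ra_la[simp]: "ra (la g a) h = la g (ra a h)" for g h a using mg by blast
  have ra_ra[simp]: "ra (ra a g) h = ra a (m g h)" for g h a using mg by blast
  note defs = part_AH_def part_HA_def inl_pm_def inr_pm_def assoc_pm_def tmul_def tlact_def tract_def
  have lin_D1: "linear_pm ?D1" and lin_D0: "linear_pm ?D0" and lin_f: "linear_pm ?f"
    by (rule linear_lin_ext)+
  have c1: "?mul (?mul x y) z = ?mul x (?mul y z)" for x y z
    by (rule tri_eqI[where P="\<lambda>x y z. ?mul (?mul x y) z" and Q="\<lambda>x y z. ?mul x (?mul y z)"]; (fast intro: lin_rules | simp add: defs))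
  have c2: "?la (?mul x y) a = ?la x (?la y a)" for x y a
    by (rule tri_eqI[where P="\<lambda>x y a. ?la (?mul x y) a" and Q="\<lambda>x y a. ?la x (?la y a)"]; (fast intro: lin_rules | simp add: defs))
  have c3: "?ra (?la x a) y = ?la x (?ra a y)" for x y a
    by (rule tri_eqI[where P="\<lambda>x a y. ?ra (?la x a) y" and Q="\<lambda>x a y. ?la x (?ra a y)"]; (fast intro: lin_rules | simp add: defs))
  have c4: "?ra (?ra a x) y = ?ra a (?mul x y)" for x y a
    by (rule tri_eqI[where P="\<lambda>a x y. ?ra (?ra a x) y" and Q="\<lambda>a x y. ?ra a (?mul x y)"]; (fast intro: lin_rules | simp add: defs))
  have c5: "?f (?la x a) = ?mul x (?f a)" for x a
    by (rule bi_eqI[where P="\<lambda>x a. ?f (?la x a)" and Q="\<lambda>x a. ?mul x (?f a)"]; (fast intro: lin_rules | simp add: defs))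
  have c6: "?f (?ra a x) = ?mul (?f a) x" for x a
    by (rule bi_eqI[where P="\<lambda>a x. ?f (?ra a x)" and Q="\<lambda>a x. ?mul (?f a) x"]; (fast intro: lin_rules | simp add: defs))
  have c7: "assoc_pm (tmap ?D0 id (?D0 x)) = tmap id ?D0 (?D0 x)" for x
    by (rule lin_eqI[of "\<lambda>x. assoc_pm (tmap ?D0 id (?D0 x))" "\<lambda>x. tmap id ?D0 (?D0 x)"]; (fast intro: lin_rules | simp add: defs))
  have c8: "?D0 (?mul x y) = tmul ?mul (?D0 x) (?D0 y)" for x y
    by (rule bi_eqI[where P="\<lambda>x y. ?D0 (?mul x y)" and Q="\<lambda>x y. tmul ?mul (?D0 x) (?D0 y)"]; (fast intro: lin_rules | simp add: defs))
  have c9: "assoc_pm (tmap (part_AH \<circ> ?D1) id (part_AH (?D1 a))) = tmap id ?D0 (part_AH (?D1 a))" for a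
    by (rule lin_eqI[of "\<lambda>a. assoc_pm (tmap (part_AH \<circ> ?D1) id (part_AH (?D1 a)))" "\<lambda>a. tmap id ?D0 (part_AH (?D1 a))"]; (fast intro: lin_rules | simp add: defs))
  have c10: "assoc_pm (tmap (part_HA \<circ> ?D1) id (part_AH (?D1 a))) = tmap id (part_AH \<circ> ?D1) (part_HA (?D1 a))" for a
    by (rule lin_eqI[of "\<lambda>a. assoc_pm (tmap (part_HA \<circ> ?D1) id (part_AH (?D1 a)))" "\<lambda>a. tmap id (part_AH \<circ> ?D1) (part_HA (?D1 a))"]; (fast intro: lin_rules | simp add: defs))
  have c11: "assoc_pm (tmap ?D0 id (part_HA (?D1 a))) = tmap id (part_HA \<circ> ?D1) (part_HA (?D1 a))" for a
    by (rule lin_eqI[of "\<lambda>a. assoc_pm (tmap ?D0 id (part_HA (?D1 a)))" "\<lambda>a. tmap id (part_HA \<circ> ?D1) (part_HA (?D1 a))"]; (fast intro: lin_rules | simp add: defs))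
  have c12: "?D1 (?la x a) = tlact ?mul ?la (?D0 x) (?D1 a)" for x a
    by (rule bi_eqI[where P="\<lambda>x a. ?D1 (?la x a)" and Q="\<lambda>x a. tlact ?mul ?la (?D0 x) (?D1 a)"]; (fast intro: lin_rules | simp add: defs))
  have c13: "?D1 (?ra a x) = tract ?mul ?ra (?D1 a) (?D0 x)" for x a
    by (rule bi_eqI[where P="\<lambda>a x. ?D1 (?ra a x)" and Q="\<lambda>a x. tract ?mul ?ra (?D1 a) (?D0 x)"]; (fast intro: lin_rules | simp add: defs))
  have c14: "?D0 (?f a) = tmap ?f id (part_AH (?D1 a)) + tmap id ?f (part_HA (?D1 a))" for a
    by (rule lin_eqI[of "\<lambda>a. ?D0 (?f a)" "\<lambda>a. tmap ?f id (part_AH (?D1 a)) + tmap id ?f (part_HA (?D1 a))"]; (fast intro: lin_rules | simp add: defs))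
  show ?thesis
    unfolding lm_bialgebra_def lm_algebra_def
    by (intro conjI allI; rule c1 c2 c3 c4 c5 c6 c7 c8 c9 c10 c11 c12 c13 c14 lin_D0 lin_D1 lin_f bilinear_bil_ext)
qed
end
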